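(* Assume the Setup below and $|n-p-1|>1$. Then, almost surely: (1) for either choice $\hat\alpha=c$ (with $c_0=0$) or $\hat\alpha=c\,\mathrm{tr}(W)$ (with $c_0=c$), $\hat b_S\to\min\{(n-1)^2+(n-1)-2,\ p^2+p-2\}$ as $c\to0$; (2) as $c\to\infty$, $\hat b_S\to-2$ if $\hat\alpha=c$, and $\hat b_S\to0$ if $\hat\alpha=c\,\mathrm{tr}(W)$.
   Context: Setup. Let $n\ge 2$, $p\ge1$. Let $X=(x_1,\dots,x_n)$ be a random $p\times n$ matrix whose columns are independent with $x_i\sim\mathcal N_p(\theta_i,\Sigma)$, where $\Sigma$ is a known $p\times p$ positive definite matrix and $\Theta\in\mathbb R^{p\times n}$. Let $\bar x=n^{-1}\sum_j x_j$, $\bar X=\bar x\,1_n^\top$, and $W=(X-\bar X)(X-\bar X)^\top\Sigma^{-1}$. The ridge statistic is $\hat\alpha=c$ or $\hat\alpha=c\,\mathrm{tr}(W)$ with a constant $c>0$; correspondingly $c_0=0$ or $c_0=c$. Put $V=(W+\hat\alpha I_p)^{-1}$ and define the estimated weights $$\hat a_S=\frac{(n-p-1)\mathrm{tr}(V)+\hat\alpha(\mathrm{tr}V)^2}{\mathrm{tr}(V^2W)}-(2c_0+1),\qquad \hat b_S=\{(n-1)p-2\}-\mathrm{tr}(VW)\,\hat a_S.$$ *)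

theory Defs
  imports "HOL-Probability.Probability"
begin

text \<open>Matrices: a p x n matrix is an element of real^'n^'p (rows indexed by 'p,
 columns by 'n); p = CARD('p), n = CARD('n).\<close>

definition pos_def_mat :: "real^'p^'p \<Rightarrow> bool" where
  "pos_def_mat S \<longleftrightarrow> transpose S = S \<and> (\<forall>x. x \<noteq> 0 \<longrightarrow> x \<bullet> (S *v x) > 0)"

text \<open>Density of N_p(mu, Sigma) at x.\<close>
definition mvn_density :: "real^'p^'p \<Rightarrow> real^'p \<Rightarrow> real^'p \<Rightarrow> real" where
  "mvn_density S mu x =
     exp (- ((x - mu) \<bullet> (matrix_inv S *v (x - mu))) / 2)
     / sqrt ((2 * pi) ^ CARD('p) * det S)"

text \<open>Law of X = (x_1,...,x_n) with independent columns x_i ~ N_p(theta_i, Sigma).\<close>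
definition data_law :: "real^'p^'p \<Rightarrow> real^'n^'p \<Rightarrow> (real^'n^'p) measure" where
  "data_law S Theta = density lborel
     (\<lambda>X. ennreal (\<Prod>i\<in>UNIV. mvn_density S (column i Theta) (column i X)))"

definition Xbar :: "real^'n^'p \<Rightarrow> real^'n^'p" where
  "Xbar X = (\<chi> j i. (\<Sum>k\<in>UNIV. X$j$k) / real CARD('n))"

definition Wmat :: "real^'p^'p \<Rightarrow> real^'n^'p \<Rightarrow> real^'p^'p" where
  "Wmat S X = ((X - Xbar X) ** transpose (X - Xbar X)) ** matrix_inv S"

definition Vmat :: "real^'p^'p \<Rightarrow> real^'n^'p \<Rightarrow> real \<Rightarrow> real^'p^'p" where
  "Vmat S X a = matrix_inv (Wmat S X + a *\<^sub>R mat 1)"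

text \<open>hat a_S for ridge value a (= hat alpha) and constant c0.\<close>
definition aS :: "real^'p^'p \<Rightarrow> real^'n^'p \<Rightarrow> real \<Rightarrow> real \<Rightarrow> real" where
  "aS S X a c0 =
    (let W = Wmat S X; V = Vmat S X a;
         n = real CARD('n); p = real CARD('p) in
     ((n - p - 1) * trace V + a * (trace V)^2) / trace (V ** V ** W) - (2 * c0 + 1))"

definition bS :: "real^'p^'p \<Rightarrow> real^'n^'p \<Rightarrow> real \<Rightarrow> real \<Rightarrow> real" where
  "bS S X a c0 =
    (let W = Wmat S X; V = Vmat S X a;
         n = real CARD('n); p = real CARD('p) in
     ((n - 1) * p - 2) - trace (V ** W) * aS S X a c0)"

end

theory Submission
  imports Defs "HOL-Computational_Algebra.Polynomial"
begin

lemma mat_rdistrib: "((A::real^'n^'m) + B) ** C = A ** C + B ** C"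
  by (vector matrix_matrix_mult_def sum.distrib[symmetric] field_simps)
lemma mat_diff_ldistrib: "(A::real^'n^'m) ** (B - C) = A ** B - A ** C"
  by (vector matrix_matrix_mult_def sum_subtractf[symmetric] field_simps)
lemma mat_diff_rdistrib: "((A::real^'n^'m) - B) ** C = A ** C - B ** C"
  by (vector matrix_matrix_mult_def sum_subtractf[symmetric] field_simps)
lemma mat_scaleR_left: "(k *\<^sub>R (A::real^'n^'m)) ** B = k *\<^sub>R (A ** B)"
  by (simp add: scalar_matrix_assoc)
lemma mat_scaleR_right: "(A::real^'n^'m) ** (k *\<^sub>R B) = k *\<^sub>R (A ** B)"
  by (simp add: matrix_scalar_ac scalar_matrix_assoc)
lemma mat_scaleR_mat1: "(A::real^'n^'m) ** (k *\<^sub>R mat 1) = k *\<^sub>R A"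
  by (simp add: matrix_scalar_ac)
lemma mat1_scaleR_mul: "(k *\<^sub>R mat 1) ** (A::real^'n^'m) = k *\<^sub>R A"
  by (simp add: mat_scaleR_left)
lemma trace_scaleR: "trace (k *\<^sub>R (A::real^'n^'n)) = k * trace A"
  by (simp add: trace_def sum_distrib_left)
lemma trace_transpose: "trace (transpose (A::real^'n^'n)) = trace A"
  by (simp add: trace_def transpose_def)

lemma minv_prop:
  fixes A :: "real^'n^'n" assumes "invertible A"
  shows "A ** matrix_inv A = mat 1" "matrix_inv A ** A = mat 1"
proof -
  have "\<exists>A'. A ** A' = mat 1 \<and> A' ** A = mat 1" using assms by (simp add: invertible_def)
  hence "A ** matrix_inv A = mat 1 \<and> matrix_inv A ** A = mat 1"
    unfolding matrix_inv_def by (rule someI_ex)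
  thus "A ** matrix_inv A = mat 1" "matrix_inv A ** A = mat 1" by auto
qed

lemma minv_unique:
  fixes A B :: "real^'n^'n" assumes "A ** B = mat 1"
  shows "invertible A" "matrix_inv A = B"
proof -
  show inv: "invertible A" using assms invertible_right_inverse by blast
  have "matrix_inv A = matrix_inv A ** (A ** B)" using assms by simp
  also have "\<dots> = B" by (simp add: matrix_mul_assoc minv_prop(2)[OF inv])
  finally show "matrix_inv A = B" .
qed

lemma minv_transpose:
  fixes A :: "real^'n^'n" assumes "invertible A"
  shows "transpose (matrix_inv A) = matrix_inv (transpose A)"
proof -
  have "transpose A ** transpose (matrix_inv A) = mat 1"
    by (metis matrix_transpose_mul minv_prop(2)[OF assms] transpose_mat)
  thus ?thesis using minv_unique by metis
qed

lemma tendsto_det: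
  fixes A :: "'a \<Rightarrow> real^'n^'n"
  assumes "(A \<longlongrightarrow> A0) F"
  shows "((\<lambda>x. det (A x)) \<longlongrightarrow> det A0) F"
  unfolding det_def
  by (intro tendsto_intros assms)

lemma tendsto_matmul:
  fixes A :: "'a \<Rightarrow> real^'n^'m" and B :: "'a \<Rightarrow> real^'k^'n"
  assumes "(A \<longlongrightarrow> A0) F" "(B \<longlongrightarrow> B0) F"
  shows "((\<lambda>x. A x ** B x) \<longlongrightarrow> A0 ** B0) F"
  unfolding matrix_matrix_mult_def
  by (intro tendsto_intros assms)

lemma tendsto_trace:
  fixes A :: "'a \<Rightarrow> real^'n^'n"
  assumes "(A \<longlongrightarrow> A0) F"
  shows "((\<lambda>x. trace (A x)) \<longlongrightarrow> trace A0) F"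
  unfolding trace_def by (intro tendsto_intros assms)


lemma mulv_column: "(A::real^'n^'m) *v column j B = column j (A ** B)"
  by (simp add: vec_eq_iff matrix_vector_mult_def matrix_matrix_mult_def column_def)

lemma minv_entry:
  fixes A :: "real^'n^'n" assumes "det A \<noteq> 0"
  shows "matrix_inv A $ k $ j =
    det (\<chi> i l. if l = k then (if i = j then 1 else 0) else A$i$l) / det A"
proof -
  have inv: "invertible A" using assms invertible_det_nz by blast
  have "A *v column j (matrix_inv A) = column j (mat 1)"
    by (simp add: mulv_column minv_prop[OF inv])
  hence "column j (matrix_inv A) = (\<chi> k. det(\<chi> i l. if l=k then column j (mat 1) $ i else A$i$l) / det A)"
    using cramer[OF assms] by blast
  hence "column j (matrix_inv A) $ k = det(\<chi> i l. if l=k then column j (mat 1) $ i else A$i$l) / det A"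
    by simp
  thus ?thesis by (simp add: column_def mat_def cong: if_cong)
qed

lemma tendsto_minv:
  fixes A :: "'a \<Rightarrow> real^'n^'n"
  assumes "(A \<longlongrightarrow> A0) F" "invertible A0"
  shows "((\<lambda>x. matrix_inv (A x)) \<longlongrightarrow> matrix_inv A0) F"
proof -
  have d0: "det A0 \<noteq> 0" using assms(2) invertible_det_nz by blast
  have dl: "((\<lambda>x. det (A x)) \<longlongrightarrow> det A0) F" by (rule tendsto_det[OF assms(1)])
  hence ev: "eventually (\<lambda>x. det (A x) \<noteq> 0) F" using d0 tendsto_imp_eventually_ne by blast
  show ?thesis
  proof (rule vec_tendstoI, rule vec_tendstoI)
    fix k j
    have lim: "((\<lambda>x. det (\<chi> i l. if l = k then (if i = j then 1 else 0) else A x$i$l) / det (A x))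
       \<longlongrightarrow> det (\<chi> i l. if l = k then (if i = j then 1 else 0) else A0$i$l) / det A0) F"
    proof (intro tendsto_divide dl d0 tendsto_det)
      show "((\<lambda>x. \<chi> i l. if l = k then (if i = j then 1 else 0) else A x$i$l) \<longlongrightarrow>
         (\<chi> i l. if l = k then (if i = j then 1 else 0) else A0$i$l)) F"
        by (intro tendsto_vec_lambda) (auto intro: tendsto_vec_nth[OF tendsto_vec_nth[OF assms(1)]])
    qed
    show "((\<lambda>x. matrix_inv (A x) $ k $ j) \<longlongrightarrow> matrix_inv A0 $ k $ j) F"
      unfolding minv_entry[OF d0]
      by (rule Lim_transform_eventually[OF lim]) (use ev in \<open>auto elim!: eventually_mono simp: minv_entry\<close>)
  qed
qed

lemma null_bounded_rays:
  fixes T :: "'a :: euclidean_space set"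
  assumes T: "T \<in> sets lebesgue" and "bounded T"
    and fin: "\<And>x. x \<noteq> 0 \<Longrightarrow> finite {c. 0 \<le> c \<and> c *\<^sub>R x \<in> T} \<and> card {c. 0 \<le> c \<and> c *\<^sub>R x \<in> T} \<le> N"
  shows "T \<in> null_sets lebesgue"
proof -
  obtain M where "0 < M" "T \<subseteq> ball 0 M"
    using \<open>bounded T\<close> by (auto dest: bounded_subset_ballD)
  let ?f = "\<lambda>n. root DIM('a) (Suc n)"
  let ?A = "\<lambda>n. (*\<^sub>R) (?f n) -` T"
  have "?f n *\<^sub>R x \<in> T \<Longrightarrow> x \<in> (*\<^sub>R) (1 / ?f n) ` T" for x n
    by (rule image_eqI[of _ _ "?f n *\<^sub>R x"]) auto
  then have vimage_eq_image: "(*\<^sub>R) (?f n) -` T = (*\<^sub>R) (1 / ?f n) ` T" for n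
    by auto
  have eq: "(1 / ?f n) ^ DIM('a) = 1 / Suc n" for n
    by (simp add: field_simps)
  { fix n x assume x: "root DIM('a) (1 + real n) *\<^sub>R x \<in> T"
    have "1 * norm x \<le> root DIM('a) (1 + real n) * norm x"
      by (rule mult_mono) auto
    also have "\<dots> < M"
      using x \<open>T \<subseteq> ball 0 M\<close> by auto
    finally have "norm x < M" by simp }
  note less_M = this
  have meas: "?A i \<in> sets lebesgue" for i
    using measurable_sets[OF lebesgue_measurable_scaling[of "?f i"] T] by auto
  have "(\<Sum>n. ennreal (1 / Suc n)) = top"
    using not_summable_harmonic[where 'a=real] summable_Suc_iff[where f="\<lambda>n. 1 / (real n)"]
    by (intro summable_iff_suminf_neq_top) (auto simp add: inverse_eq_divide)
  then have "top * emeasure lebesgue T = (\<Sum>n. (1 / ?f n)^DIM('a) * emeasure lebesgue T)"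
    unfolding ennreal_suminf_multc eq by simp
  also have "\<dots> = (\<Sum>n. emeasure lebesgue (?A n))"
    unfolding vimage_eq_image using emeasure_lebesgue_affine[of "1 / ?f n" 0 T for n] by simp
  also have "\<dots> = (\<integral>\<^sup>+ x. (\<Sum>n. indicator (?A n) x) \<partial>lebesgue)"
  proof -
    have meas': "(indicator (?A i) :: 'a \<Rightarrow> ennreal) \<in> borel_measurable lebesgue" for i
      using meas[of i] by (rule borel_measurable_indicator)
    show ?thesis
      by (simp only: nn_integral_suminf[OF meas'] nn_integral_indicator[OF meas])
  qed
  also have "\<dots> \<le> (\<integral>\<^sup>+ x. of_nat N * indicator (ball (0::'a) M) x \<partial>lebesgue)"
  proof (rule nn_integral_mono_AE)
    have null0: "{0::'a} \<in> null_sets lebesgue"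
      using negligible_iff_null_sets negligible_sing by blast
    have pw: "(\<Sum>n. indicator (?A n) x) \<le> of_nat N * (indicator (ball 0 M) x :: ennreal)"
      if x0: "x \<noteq> 0" for x :: 'a
    proof -
        let ?I = "{n. ?f n *\<^sub>R x \<in> T}"
        let ?C = "{c. 0 \<le> c \<and> c *\<^sub>R x \<in> T}"
        have inj: "inj_on ?f ?I" by (auto intro!: inj_onI)
        have sub: "?f ` ?I \<subseteq> ?C" by auto
        have finC: "finite ?C" and cardC: "card ?C \<le> N" using fin[OF x0] by auto
        have finI: "finite ?I" using finite_imageD[OF finite_subset[OF sub finC] inj] .
        have cardI: "card ?I \<le> N"
          using card_image[OF inj] card_mono[OF finC sub] cardC by linarith
        have "(\<Sum>n. indicator (?A n) x :: ennreal) = (\<Sum>n\<in>?I. indicator (?A n) x)"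
          by (rule suminf_finite[OF finI]) (auto simp: indicator_def)
        also have "\<dots> = of_nat (card ?I)" by (simp add: indicator_def)
        finally have s: "(\<Sum>n. indicator (?A n) x :: ennreal) = of_nat (card ?I)" .
        show ?thesis
        proof (cases "x \<in> ball 0 M")
          case True
          then show ?thesis using s cardI by (simp add: indicator_def)
        next
          case False
          then have "?I = {}" using less_M by (auto simp: dist_norm)
          then show ?thesis using s by simp
        qed
    qed
    show "AE x in lebesgue. (\<Sum>n. indicator (?A n) x) \<le> of_nat N * (indicator (ball 0 M) x :: ennreal)"
      using AE_not_in[OF null0] by eventually_elim (use pw in auto)
  qed
  also have "\<dots> = of_nat N * emeasure lebesgue (ball (0::'a) M)"
    by (rule nn_integral_cmult_indicator) simp
  also have "\<dots> < top"
    using lmeasurable_ball by (auto simp: fmeasurable_def ennreal_mult_less_top of_nat_less_top)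
  finally have "emeasure lebesgue T = 0"
    by (simp add: ennreal_top_mult split: if_split_asm)
  then show "T \<in> null_sets lebesgue"
    unfolding null_sets_def using T by auto
qed

lemma negligible_rays:
  fixes S :: "'a :: euclidean_space set"
  assumes "closed S"
    and fin: "\<And>x. x \<noteq> 0 \<Longrightarrow> finite {c. 0 \<le> c \<and> a + c *\<^sub>R x \<in> S} \<and> card {c. 0 \<le> c \<and> a + c *\<^sub>R x \<in> S} \<le> N"
  shows "negligible S"
proof -
  let ?S = "(+) (-a) ` S"
  have S': "?S = {y. a + y \<in> S}" by (force simp: image_iff)
  have "negligible ?S"
  proof (subst negligible_on_intervals, intro allI)
    fix u v
    have cl: "closed ?S" using \<open>closed S\<close> closed_translation by blast
    show "negligible (?S \<inter> cbox u v)"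
      unfolding negligible_iff_null_sets
    proof (rule null_bounded_rays)
      show "?S \<inter> cbox u v \<in> sets lebesgue"
        using cl by (intro sets.Int borel_closed[THEN sets_completionI_sets] lmeasurable_cbox[THEN fmeasurableD]) auto
      show "bounded (?S \<inter> cbox u v)" by (simp add: bounded_Int)
      fix x :: 'a assume x0: "x \<noteq> 0"
      have sub: "{c. 0 \<le> c \<and> c *\<^sub>R x \<in> ?S \<inter> cbox u v} \<subseteq> {c. 0 \<le> c \<and> a + c *\<^sub>R x \<in> S}"
        using S' by auto
      show "finite {c. 0 \<le> c \<and> c *\<^sub>R x \<in> ?S \<inter> cbox u v} \<and> card {c. 0 \<le> c \<and> c *\<^sub>R x \<in> ?S \<inter> cbox u v} \<le> N"
        using fin[OF x0] finite_subset[OF sub] card_mono[OF _ sub] by (meson order_trans)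
    qed
  qed
  then show ?thesis using negligible_translation_rev by blast
qed

definition polyfun :: "nat \<Rightarrow> (real \<Rightarrow> real) \<Rightarrow> bool" where
  "polyfun d f \<longleftrightarrow> (\<exists>q. degree q \<le> d \<and> (\<forall>c. f c = poly q c))"

lemma polyfun_const: "polyfun d (\<lambda>c. a)"
  unfolding polyfun_def by (rule exI[of _ "[:a:]"]) simp

lemma polyfun_affine: "polyfun 1 (\<lambda>c. a + c * b)"
  unfolding polyfun_def by (rule exI[of _ "[:a, b:]"]) (simp add: algebra_simps)

lemma polyfun_mono: "polyfun d f \<Longrightarrow> d \<le> e \<Longrightarrow> polyfun e f"
  unfolding polyfun_def by (meson order_trans)

lemma polyfun_add: "polyfun d f \<Longrightarrow> polyfun d g \<Longrightarrow> polyfun d (\<lambda>c. f c + g c)"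
  unfolding polyfun_def
  by (metis (no_types, lifting) degree_add_le poly_add)

lemma polyfun_cmult: "polyfun d f \<Longrightarrow> polyfun d (\<lambda>c. k * f c)"
  unfolding polyfun_def
  by (metis (no_types, lifting) degree_smult_le order_trans poly_smult)

lemma polyfun_mult: "polyfun d f \<Longrightarrow> polyfun e g \<Longrightarrow> polyfun (d + e) (\<lambda>c. f c * g c)"
  unfolding polyfun_def
  by (metis (no_types, lifting) add_mono degree_mult_le order_trans poly_mult)

lemma polyfun_sum:
  assumes "finite A" "\<And>i. i \<in> A \<Longrightarrow> polyfun d (f i)"
  shows "polyfun d (\<lambda>c. \<Sum>i\<in>A. f i c)"
  using assms
proof (induction A rule: finite_induct)
  case empty then show ?case by (simp add: polyfun_const)
next
  case (insert x F) then show ?case by (simp add: polyfun_add)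
qed

lemma polyfun_prod:
  assumes "finite A" "\<And>i. i \<in> A \<Longrightarrow> polyfun d (f i)"
  shows "polyfun (card A * d) (\<lambda>c. \<Prod>i\<in>A. f i c)"
  using assms
proof (induction A rule: finite_induct)
  case empty then show ?case by (simp add: polyfun_const)
next
  case (insert x F)
  have "polyfun (d + card F * d) (\<lambda>c. f x c * (\<Prod>i\<in>F. f i c))"
    using insert by (intro polyfun_mult) auto
  then show ?case using insert by simp
qed

lemma polyfun_det:
  fixes M :: "real \<Rightarrow> real^'k^'k"
  assumes "\<And>i j. polyfun d (\<lambda>c. M c $ i $ j)"
  shows "polyfun (CARD('k) * d) (\<lambda>c. det (M c))"
  unfolding det_def
  by (intro polyfun_sum polyfun_cmult polyfun_prod[where A=UNIV, simplified] assms) auto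

lemma polyfun_roots:
  assumes "polyfun d f" "f 0 \<noteq> 0"
  shows "finite {c. f c = 0} \<and> card {c. f c = 0} \<le> d"
proof -
  obtain q where q: "degree q \<le> d" "\<And>c. f c = poly q c" using assms(1) unfolding polyfun_def by blast
  have "q \<noteq> 0" using assms(2) q(2)[of 0] by auto
  then show ?thesis using poly_roots_finite[of q] card_poly_roots_bound[of q] q by (simp add: order_trans)
qed

lemma null_sets_density_any:
  assumes A: "A \<in> null_sets M"
  shows "A \<in> null_sets (density M f)"
proof -
  have le: "(\<integral>\<^sup>+x. f x * indicator A x \<partial>M) = 0"
  proof -
    have "(\<integral>\<^sup>+x. f x * indicator A x \<partial>M) \<le> (\<integral>\<^sup>+x. \<infinity> * indicator A x \<partial>M)"
      by (intro nn_integral_mono) (auto simp: indicator_def)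
    also have "\<dots> = \<infinity> * emeasure M A" by (rule nn_integral_cmult_indicator) (use A in auto)
    also have "\<dots> = 0" using A by (simp add: null_setsD1)
    finally show ?thesis by simp
  qed
  have "emeasure (density M f) A = 0" unfolding density_def emeasure_measure_of_conv using le by simp
  thus ?thesis using A by (simp add: null_sets_def)
qed

definition Yc :: "real^'n^'p \<Rightarrow> real^'n^'p" where "Yc X = X - Xbar X"

lemma Yc_lin: "Yc (a + c *\<^sub>R X) = Yc a + c *\<^sub>R Yc X"
  by (simp add: Yc_def Xbar_def vec_eq_iff sum.distrib sum_distrib_left algebra_simps add_divide_distrib)

lemma tendsto_Yc: "((\<lambda>X. Yc X) \<longlongrightarrow> Yc X0) (at X0)"
  unfolding Yc_def Xbar_def
  by (intro tendsto_diff tendsto_ident_at tendsto_vec_lambda tendsto_divide tendsto_sum tendsto_const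
       tendsto_vec_nth) auto

lemma tendsto_transpose: "(A \<longlongrightarrow> A0) F \<Longrightarrow> ((\<lambda>x. transpose (A x :: real^'n^'m)) \<longlongrightarrow> transpose A0) F"
  unfolding transpose_def by (intro tendsto_vec_lambda tendsto_vec_nth)

definition polymat :: "nat \<Rightarrow> (real \<Rightarrow> real^'n^'m) \<Rightarrow> bool" where
  "polymat d A \<longleftrightarrow> (\<forall>i j. polyfun d (\<lambda>c. A c $ i $ j))"

lemma polymat_mul: "polymat d A \<Longrightarrow> polymat e B \<Longrightarrow> polymat (d + e) (\<lambda>c. A c ** B c)"
  unfolding polymat_def matrix_matrix_mult_def
  by (auto intro!: polyfun_sum polyfun_mult)

lemma polymat_transpose: "polymat d A \<Longrightarrow> polymat d (\<lambda>c. transpose (A c))"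
  unfolding polymat_def transpose_def by auto

lemma polymat_add_const: "polymat d A \<Longrightarrow> polymat d (\<lambda>c. A c + B)"
  unfolding polymat_def by (auto intro!: polyfun_add polyfun_const)

lemma polymat_Yc: "polymat 1 (\<lambda>c. Yc (a + c *\<^sub>R X))"
  unfolding polymat_def Yc_lin by (simp, metis One_nat_def polyfun_affine)

lemma negligible_det_zero:
  fixes F :: "'a::euclidean_space \<Rightarrow> real^'k^'k"
  assumes cont: "\<And>x0. ((\<lambda>x. F x) \<longlongrightarrow> F x0) (at x0)"
    and a: "det (F a) \<noteq> 0"
    and pm: "\<And>x. polymat d (\<lambda>c. F (a + c *\<^sub>R x))"
  shows "negligible {x. det (F x) = 0}"
proof (rule negligible_rays[where a=a and N="CARD('k) * d"])
  have cdet: "continuous_on UNIV (\<lambda>x. det (F x))"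
    using tendsto_det[OF cont] by (simp add: continuous_on_def continuous_at_imp_continuous_on isCont_def)
  show "closed {x. det (F x) = 0}"
    using closed_Collect_eq[OF cdet continuous_on_const] by simp
  fix x :: 'a
  have "polyfun (CARD('k) * d) (\<lambda>c. det (F (a + c *\<^sub>R x)))"
    using pm[of x] unfolding polymat_def by (intro polyfun_det) blast
  then have r: "finite {c. det (F (a + c *\<^sub>R x)) = 0} \<and> card {c. det (F (a + c *\<^sub>R x)) = 0} \<le> CARD('k) * d"
    by (rule polyfun_roots) (use a in simp)
  have sub: "{c. 0 \<le> c \<and> a + c *\<^sub>R x \<in> {x. det (F x) = 0}} \<subseteq> {c. det (F (a + c *\<^sub>R x)) = 0}" by auto
  show "finite {c. 0 \<le> c \<and> a + c *\<^sub>R x \<in> {x. det (F x) = 0}} \<and> card {c. 0 \<le> c \<and> a + c *\<^sub>R x \<in> {x. det (F x) = 0}} \<le> CARD('k) * d"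
    using r finite_subset[OF sub] card_mono[OF _ sub] by (meson order_trans)
qed

definition ones :: "real^'n" where "ones = (\<chi> i. 1)"
definition Jm :: "real^'n^'n" where "Jm = (\<chi> i j. 1 / real CARD('n))"

lemma sum_ones[simp]: "(\<Sum>i\<in>UNIV. (ones::real^'n) $ i) = real CARD('n)"
  by (simp add: ones_def)

lemma Yc_ones: "Yc X *v ones = 0"
  by (simp add: Yc_def Xbar_def ones_def vec_eq_iff matrix_vector_mult_def sum_subtractf)

lemma Jm_mulv: "Jm *v v = ((\<Sum>i\<in>UNIV. v $ i) / real CARD('n)) *\<^sub>R (ones :: real^'n)"
  by (simp add: Jm_def ones_def vec_eq_iff matrix_vector_mult_def sum_divide_distrib)

lemma inner_ones: "ones \<bullet> v = (\<Sum>i\<in>UNIV. v $ i)"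
  by (simp add: ones_def inner_vec_def)

lemma inner_transpose: "(x::real^'m) \<bullet> (transpose A *v y) = (A *v x) \<bullet> y"
  by (metis dot_lmul_matrix inner_commute transpose_matrix_vector vector_transpose_matrix)

lemma inner_vmul: "(x::real^'m) \<bullet> (y v* A) = (A *v x) \<bullet> y"
  by (metis inner_transpose transpose_matrix_vector)

lemma det_ne0_from_ker:
  fixes M :: "real^'n^'n"
  assumes "\<And>v. M *v v = 0 \<Longrightarrow> v = 0"
  shows "det M \<noteq> 0"
  using assms invertible_det_nz invertible_left_inverse matrix_left_invertible_ker by blast

lemma pos_def_mat_1: "pos_def_mat (mat 1 :: real^'n^'n)"
  by (simp add: pos_def_mat_def)

lemma gram_det_ne0:
  fixes A :: "real^'n^'p"
  assumes "\<And>w. transpose A *v w = 0 \<Longrightarrow> w = 0"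
  shows "det (A ** transpose A) \<noteq> 0"
proof (rule det_ne0_from_ker)
  fix w assume "(A ** transpose A) *v w = 0"
  then have "w \<bullet> (A *v (transpose A *v w)) = 0" by (metis matrix_vector_mul_assoc inner_zero_right)
  then have "(transpose A *v w) \<bullet> (transpose A *v w) = 0"
    by (metis inner_transpose transpose_transpose)
  then show "w = 0" using assms by simp
qed

lemma K_inj:
  fixes Y :: "real^'n^'p" and Q :: "real^'p^'p"
  assumes Y1: "Y *v ones = 0" and Q: "pos_def_mat Q"
    and ker: "\<And>v. Y *v v = 0 \<Longrightarrow> \<exists>s. v = s *\<^sub>R ones"
    and Mv: "(transpose Y ** Q ** Y + Jm) *v v = 0"
  shows "v = 0"
proof -
  let ?u = "Y *v v"
  have n0: "real CARD('n) \<noteq> 0" by simp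
  have e: "transpose Y *v (Q *v ?u) + ((\<Sum>i\<in>UNIV. v $ i) / real CARD('n)) *\<^sub>R ones = 0"
    using Mv by (simp add: matrix_vector_mult_add_rdistrib Jm_mulv matrix_vector_mul_assoc[symmetric])
  have "ones \<bullet> (transpose Y *v (Q *v ?u)) = 0"
    by (simp add: inner_vmul Y1)
  moreover have "ones \<bullet> (ones :: real^'n) = real CARD('n)"
    by (simp only: inner_ones sum_ones)
  ultimately have "ones \<bullet> (transpose Y *v (Q *v ?u) + ((\<Sum>i\<in>UNIV. v $ i) / real CARD('n)) *\<^sub>R ones) = (\<Sum>i\<in>UNIV. v $ i)"
    by (simp add: inner_add_right)
  with e have s0: "(\<Sum>i\<in>UNIV. v $ i) = 0" by simp
  with e have "transpose Y *v (Q *v ?u) = 0" by simp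
  then have "v \<bullet> (transpose Y *v (Q *v ?u)) = 0" by simp
  then have "?u \<bullet> (Q *v ?u) = 0" by (simp add: inner_vmul)
  then have "?u = 0" using Q unfolding pos_def_mat_def by force
  then obtain s where s: "v = s *\<^sub>R ones" using ker by blast
  with s0 have "s * real CARD('n) = 0" by (simp add: ones_def)
  then have "s = 0" by simp
  then show "v = 0" using s by simp
qed

lemma ker_from_det:
  fixes Y :: "real^'n^'p"
  assumes Y1: "Y *v ones = 0" and d: "det (transpose Y ** Y + Jm) \<noteq> 0" and v: "Y *v v = 0"
  shows "\<exists>s. v = s *\<^sub>R ones"
proof -
  let ?s = "(\<Sum>i\<in>UNIV. v $ i) / real CARD('n)"
  have Jo: "Jm *v ones = (ones::real^'n)"
    by (simp add: Jm_mulv)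
  have "(transpose Y ** Y + Jm) *v (v - ?s *\<^sub>R ones) = 0"
    by (simp add: matrix_vector_mult_add_rdistrib matrix_vector_mult_diff_distrib
        matrix_vector_mul_assoc[symmetric] v Y1 Jo matrix_vector_mult_scaleR Jm_mulv)
  moreover have "inj ((*v) (transpose Y ** Y + Jm))"
    using d invertible_det_nz inj_matrix_vector_mult by blast
  ultimately have "v - ?s *\<^sub>R ones = 0"
    by (metis injD matrix_vector_mult_0_right)
  then show ?thesis by (intro exI[of _ ?s]) simp
qed

lemma witness1:
  assumes "CARD('p) < CARD('n)"
  shows "\<exists>a::real^'n^'p. det (Yc a ** transpose (Yc a)) \<noteq> 0"
proof -
  obtain j0 :: 'n where True by blast
  have "card (UNIV :: 'p set) \<le> card (UNIV - {j0} :: 'n set)" using assms by simp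
  then obtain h :: "'p \<Rightarrow> 'n" where hs: "h ` UNIV \<subseteq> UNIV - {j0}" and hi: "inj_on h UNIV"
    using card_le_inj[of "UNIV::'p set" "UNIV - {j0}"] by auto
  define a :: "real^'n^'p" where "a = (\<chi> i j. if j = h i then 1 else 0)"
  have Ya: "Yc a $ i $ j = (if j = h i then 1 else 0) - 1 / real CARD('n)" for i j
    by (simp add: Yc_def Xbar_def a_def)
  have comp: "(transpose (Yc a) *v w) $ j = (\<Sum>i\<in>UNIV. (if j = h i then w$i else 0)) - (\<Sum>i\<in>UNIV. w$i) / real CARD('n)" for w j
    by (simp add: matrix_vector_mult_def transpose_def Ya left_diff_distrib sum_subtractf sum_divide_distrib if_distrib[of "\<lambda>x. x * _"] cong: if_cong)
  show ?thesis
  proof (intro exI gram_det_ne0)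
    fix w assume w: "transpose (Yc a) *v w = 0"
    have "(\<Sum>i\<in>UNIV. (if j0 = h i then w$i else 0)) = 0" using hs by (intro sum.neutral) (auto simp: image_subset_iff)
    with w[THEN arg_cong[where f="\<lambda>v. v $ j0"]] have s0: "(\<Sum>i\<in>UNIV. w$i) = 0"
      by (simp only: comp) simp
    show "w = 0"
    proof (rule vec_eq_iff[THEN iffD2], rule allI)
      fix i0
      have "(\<Sum>i\<in>UNIV. (if h i0 = h i then w$i else 0)) = (\<Sum>i\<in>UNIV. (if i0 = i then w$i else 0))"
        using hi by (intro sum.cong) (auto dest: injD)
      also have "\<dots> = w $ i0" by simp
      finally have "(transpose (Yc a) *v w) $ h i0 = w $ i0" by (simp only: comp s0)
      with w show "w $ i0 = 0 $ i0" by simp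
    qed
  qed
qed

lemma witness2:
  assumes "CARD('n) \<le> CARD('p)"
  shows "\<exists>a::real^'n^'p. det (transpose (Yc a) ** Yc a + Jm) \<noteq> 0"
proof -
  have "card (UNIV :: 'n set) \<le> card (UNIV :: 'p set)" using assms by simp
  then obtain h :: "'n \<Rightarrow> 'p" where hi: "inj_on h UNIV"
    using card_le_inj[of "UNIV::'n set" "UNIV :: 'p set"] by auto
  define a :: "real^'n^'p" where "a = (\<chi> i j. if i = h j then 1 else 0)"
  have Ya: "Yc a $ h j0 $ j = (if j0 = j then 1 else 0) - 1 / real CARD('n)" for j0 j
  proof -
    have "(\<Sum>k\<in>UNIV. a $ h j0 $ k) = (\<Sum>k\<in>UNIV. if j0 = k then 1 else 0)"
      unfolding a_def using hi by (intro sum.cong) (auto dest: injD)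
    then show ?thesis using hi by (auto simp: Yc_def Xbar_def a_def dest: injD)
  qed
  have ker: "\<exists>s. v = s *\<^sub>R ones" if v: "Yc a *v v = 0" for v
  proof (intro exI[of _ "(\<Sum>i\<in>UNIV. v$i) / real CARD('n)"] vec_eq_iff[THEN iffD2] allI)
    fix j0
    have "(Yc a *v v) $ h j0 = v $ j0 - (\<Sum>i\<in>UNIV. v$i) / real CARD('n)"
      by (simp add: matrix_vector_mult_def Ya left_diff_distrib sum_subtractf sum_divide_distrib if_distrib[of "\<lambda>x. x * _"] cong: if_cong)
    with v show "v $ j0 = (((\<Sum>i\<in>UNIV. v$i) / real CARD('n)) *\<^sub>R ones) $ j0"
      by (simp add: ones_def)
  qed
  show ?thesis
  proof (intro exI det_ne0_from_ker)
    fix v assume "(transpose (Yc a) ** Yc a + Jm) *v v = 0"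
    then have "(transpose (Yc a) ** mat 1 ** Yc a + Jm) *v v = 0" by simp
    then show "v = 0" using K_inj[of "Yc a" "mat 1" v] Yc_ones pos_def_mat_1 ker by blast
  qed
qed

lemma AE_from_negligible:
  assumes "negligible {X. P X}"
  shows "AE X in data_law S Theta. \<not> P X"
proof -
  have "{X. P X} \<in> null_sets lebesgue" using negligible_iff_null_sets[THEN iffD1, OF assms] .
  note nl = this
  obtain N where N: "N \<in> null_sets lborel" "{X. P X} \<subseteq> N"
    using null_sets_completion_iff2[THEN iffD1, OF nl] by (elim bexE) blast
  have "N \<in> null_sets (data_law S Theta)"
    unfolding data_law_def by (rule null_sets_density_any[OF N(1)])
  then show ?thesis by (rule AE_I') (use N(2) in blast)
qed

lemma AE_good1:
  assumes "CARD('p) < CARD('n)"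
  shows "AE X in data_law S Theta. det (Yc (X::real^'n^'p) ** transpose (Yc X)) \<noteq> 0"
proof -
  obtain a :: "real^'n^'p" where a: "det (Yc a ** transpose (Yc a)) \<noteq> 0"
    using witness1[OF assms] by blast
  have "negligible {X::real^'n^'p. det (Yc X ** transpose (Yc X)) = 0}"
  proof (rule negligible_det_zero[where a=a and d=2])
    fix x0 :: "real^'n^'p"
    show "((\<lambda>X. Yc X ** transpose (Yc X)) \<longlongrightarrow> Yc x0 ** transpose (Yc x0)) (at x0)"
      by (intro tendsto_matmul tendsto_transpose tendsto_Yc)
  next
    show "det (Yc a ** transpose (Yc a)) \<noteq> 0" by (rule a)
  next
    fix x :: "real^'n^'p"
    show "polymat 2 (\<lambda>c. Yc (a + c *\<^sub>R x) ** transpose (Yc (a + c *\<^sub>R x)))"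
      using polymat_mul[OF polymat_Yc[of a x] polymat_transpose[OF polymat_Yc[of a x]]] by (simp add: numeral_2_eq_2)
  qed
  then show ?thesis by (rule AE_from_negligible)
qed

lemma AE_good2:
  assumes "CARD('n) \<le> CARD('p)"
  shows "AE X in data_law S Theta. det (transpose (Yc (X::real^'n^'p)) ** Yc X + Jm) \<noteq> 0"
proof -
  obtain a :: "real^'n^'p" where a: "det (transpose (Yc a) ** Yc a + Jm) \<noteq> 0"
    using witness2[OF assms] by blast
  have "negligible {X::real^'n^'p. det (transpose (Yc X) ** Yc X + Jm) = 0}"
  proof (rule negligible_det_zero[where a=a and d=2])
    fix x0 :: "real^'n^'p"
    show "((\<lambda>X. transpose (Yc X) ** Yc X + Jm) \<longlongrightarrow> transpose (Yc x0) ** Yc x0 + Jm) (at x0)"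
      by (intro tendsto_add tendsto_const tendsto_matmul tendsto_transpose tendsto_Yc)
  next
    show "det (transpose (Yc a) ** Yc a + Jm) \<noteq> 0" by (rule a)
  next
    fix x :: "real^'n^'p"
    show "polymat 2 (\<lambda>c. transpose (Yc (a + c *\<^sub>R x)) ** Yc (a + c *\<^sub>R x) + Jm)"
      using polymat_add_const[OF polymat_mul[OF polymat_transpose[OF polymat_Yc[of a x]] polymat_Yc[of a x]], of Jm] by (simp add: numeral_2_eq_2)
  qed
  then show ?thesis by (rule AE_from_negligible)
qed

lemma minv_unique_left:
  fixes A B :: "real^'n^'n" assumes "B ** A = mat 1"
  shows "invertible A" "matrix_inv A = B"
  using minv_unique[of A B] assms matrix_left_right_inverse by auto

lemma diag_quad: "(transpose Z ** M ** Z) $ j $ j = column j (Z::real^'n^'p) \<bullet> (M *v column j Z)"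
  apply (simp add: matrix_matrix_mult_def matrix_vector_mult_def transpose_def column_def inner_vec_def
      sum_distrib_left sum_distrib_right mult_ac)
  apply (rule trans[OF sum.swap])
  apply (simp add: mult_ac)
  done

lemma trace_quad_pos:
  fixes Z :: "real^'n^'p" and M :: "real^'p^'p"
  assumes M: "pos_def_mat M" and Z: "Z \<noteq> 0"
  shows "trace (transpose Z ** M ** Z) > 0"
proof -
  have "\<exists>j. column j Z \<noteq> 0"
  proof (rule ccontr)
    assume "\<not> (\<exists>j. column j Z \<noteq> 0)"
    then have c0: "column j Z = 0" for j by blast
    have "Z $ i $ j = 0" for i j
      using c0[of j] by (simp add: column_def vec_eq_iff)
    then have "Z = 0" by (simp add: vec_eq_iff)
    with Z show False by simp
  qed
  then obtain j where j: "column j Z \<noteq> 0" by blast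
  have ge: "column i Z \<bullet> (M *v column i Z) \<ge> 0" for i
    using M unfolding pos_def_mat_def by (cases "column i Z = 0") (auto intro: less_imp_le)
  have "trace (transpose Z ** M ** Z) = (\<Sum>i\<in>UNIV. column i Z \<bullet> (M *v column i Z))"
    by (simp add: trace_def diag_quad)
  also have "\<dots> > 0"
    using j M unfolding pos_def_mat_def
    by (intro sum_pos2[where i=j]) (auto intro: ge)
  finally show ?thesis .
qed

lemma posdef_invertible:
  fixes S :: "real^'p^'p" assumes "pos_def_mat S" shows "invertible S"
proof -
  have "\<And>x. S *v x = 0 \<Longrightarrow> x = 0" using assms unfolding pos_def_mat_def by force
  then show ?thesis using invertible_left_inverse matrix_left_invertible_ker by blast
qed

lemma posdef_inv:
  fixes S :: "real^'p^'p" assumes S: "pos_def_mat S"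
  shows "pos_def_mat (matrix_inv S)" "transpose (matrix_inv S) = matrix_inv S"
proof -
  have inv: "invertible S" by (rule posdef_invertible[OF S])
  have sym: "transpose S = S" using S by (simp add: pos_def_mat_def)
  show tQ: "transpose (matrix_inv S) = matrix_inv S" by (simp add: minv_transpose[OF inv] sym)
  show "pos_def_mat (matrix_inv S)"
    unfolding pos_def_mat_def
  proof (intro conjI allI impI tQ)
    fix x :: "real^'p" assume x: "x \<noteq> 0"
    let ?y = "matrix_inv S *v x"
    have Sy: "S *v ?y = x" by (simp add: matrix_vector_mul_assoc minv_prop[OF inv])
    have "?y \<noteq> 0" using Sy x by auto
    then have "?y \<bullet> (S *v ?y) > 0" using S unfolding pos_def_mat_def by blast
    then show "x \<bullet> (matrix_inv S *v x) > 0" using Sy by (simp add: inner_commute)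
  qed
qed

lemma Jm_Jm: "Jm ** Jm = (Jm :: real^'n^'n)"
  by (simp add: Jm_def matrix_matrix_mult_def vec_eq_iff power2_eq_square[symmetric]) (simp add: power2_eq_square)

lemma trace_Jm: "trace (Jm :: real^'n^'n) = 1"
  by (simp add: Jm_def trace_def)

lemma transpose_Jm: "transpose (Jm :: real^'n^'n) = Jm"
  by (simp add: Jm_def transpose_def)

lemma YJ: "Yc (X::real^'n^'p) ** (Jm::real^'n^'n) = 0"
proof -
  have "(Yc X ** Jm) $ i $ j = (Yc X *v ones) $ i / real CARD('n)" for i j
    by (simp add: matrix_matrix_mult_def matrix_vector_mult_def Jm_def ones_def sum_divide_distrib)
  then show ?thesis by (simp add: vec_eq_iff Yc_ones)
qed

lemma Jm_singular: assumes "CARD('n) \<ge> 2" shows "det (Jm :: real^'n^'n) = 0"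
proof -
  obtain i :: 'n where True by blast
  have "(UNIV::'n set) \<noteq> {i}"
  proof
    assume "(UNIV::'n set) = {i}"
    then have "card (UNIV::'n set) = card {i}" by (rule arg_cong)
    with assms show False by simp
  qed
  then obtain j :: 'n where "j \<notin> {i}" by auto
  then have "i \<noteq> j" by simp
  then show ?thesis by (rule det_identical_rows) (simp add: row_def Jm_def)
qed

lemma big_alpha_alg:
  fixes W :: "real^'p^'p" and t :: real
  assumes t: "t > 0" and inv: "invertible (mat 1 + t *\<^sub>R W)"
  shows "trace (matrix_inv (W + (1/t) *\<^sub>R mat 1)) = t * (real CARD('p) - t * trace (W ** matrix_inv (mat 1 + t *\<^sub>R W)))"
    "trace (matrix_inv (W + (1/t) *\<^sub>R mat 1) ** W) = t * trace (W ** matrix_inv (mat 1 + t *\<^sub>R W))"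
    "trace (matrix_inv (W + (1/t) *\<^sub>R mat 1) ** matrix_inv (W + (1/t) *\<^sub>R mat 1) ** W)
       = t^2 * trace (matrix_inv (mat 1 + t *\<^sub>R W) ** matrix_inv (mat 1 + t *\<^sub>R W) ** W)"
proof -
  define B where "B = matrix_inv (mat 1 + t *\<^sub>R W)"
  have IB: "(mat 1 + t *\<^sub>R W) ** B = mat 1" unfolding B_def by (rule minv_prop(1)[OF inv])
  then have IB': "B + t *\<^sub>R (W ** B) = mat 1" by (simp add: mat_rdistrib mat_scaleR_left)
  have "(W + (1/t) *\<^sub>R mat 1) ** (t *\<^sub>R B) = t *\<^sub>R (W ** B) + B"
    using t by (simp add: mat_rdistrib mat_scaleR_left mat_scaleR_right scaleR_add_right)
  also have "\<dots> = mat 1" using IB' by (simp add: add.commute)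
  finally have V: "matrix_inv (W + (1/t) *\<^sub>R mat 1) = t *\<^sub>R B" by (rule minv_unique(2))
  have Beq: "B = mat 1 - t *\<^sub>R (W ** B)" using IB' by (simp add: algebra_simps)
  have trB: "trace B = real CARD('p) - t * trace (W ** B)"
    by (subst Beq) (simp add: trace_sub trace_I trace_scaleR)
  show "trace (matrix_inv (W + (1/t) *\<^sub>R mat 1)) = t * (real CARD('p) - t * trace (W ** matrix_inv (mat 1 + t *\<^sub>R W)))"
    unfolding V B_def[symmetric] by (simp add: trace_scaleR trB)
  show "trace (matrix_inv (W + (1/t) *\<^sub>R mat 1) ** W) = t * trace (W ** matrix_inv (mat 1 + t *\<^sub>R W))"
  proof -
    have "trace (B ** W) = trace (W ** B)" by (rule trace_mul_sym)
    then show ?thesis unfolding V B_def[symmetric] by (simp add: trace_scaleR mat_scaleR_left)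
  qed
  show "trace (matrix_inv (W + (1/t) *\<^sub>R mat 1) ** matrix_inv (W + (1/t) *\<^sub>R mat 1) ** W)
       = t^2 * trace (matrix_inv (mat 1 + t *\<^sub>R W) ** matrix_inv (mat 1 + t *\<^sub>R W) ** W)"
    unfolding V B_def[symmetric] by (simp add: trace_scaleR mat_scaleR_left mat_scaleR_right power2_eq_square)
qed

lemma big_alpha_lim:
  fixes W :: "real^'p^'p"
  assumes "(t \<longlongrightarrow> 0) F"
  shows "((\<lambda>c. matrix_inv (mat 1 + t c *\<^sub>R W)) \<longlongrightarrow> mat 1) F"
    "eventually (\<lambda>c. invertible (mat 1 + t c *\<^sub>R W)) F"
proof -
  have l: "((\<lambda>c. mat 1 + t c *\<^sub>R W) \<longlongrightarrow> mat 1) F"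
    using tendsto_add[OF tendsto_const tendsto_scaleR[OF assms tendsto_const], of "mat 1" W] by simp
  have i1: "invertible (mat 1 :: real^'p^'p)" using minv_unique(1)[of "mat 1" "mat 1"] by simp
  have m1: "matrix_inv (mat 1 :: real^'p^'p) = mat 1" using minv_unique(2)[of "mat 1" "mat 1"] by simp
  show "((\<lambda>c. matrix_inv (mat 1 + t c *\<^sub>R W)) \<longlongrightarrow> mat 1) F"
    using tendsto_minv[OF l i1] m1 by simp
  have "((\<lambda>c. det (mat 1 + t c *\<^sub>R W)) \<longlongrightarrow> det (mat 1 :: real^'p^'p)) F" by (rule tendsto_det[OF l])
  then have "eventually (\<lambda>c. det (mat 1 + t c *\<^sub>R W) \<noteq> 0) F"
    by (rule tendsto_imp_eventually_ne) simp
  then show "eventually (\<lambda>c. invertible (mat 1 + t c *\<^sub>R W)) F"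
    by (simp add: invertible_det_nz)
qed

lemma lim_inf_gen:
  fixes t u d k tv hh dd al :: "'a \<Rightarrow> real" and p n s \<kappa> B0 :: real
  assumes ev: "eventually (\<lambda>c. t c \<noteq> 0 \<and> tv c = t c * (p - t c * u c) \<and> hh c = t c * u c
        \<and> dd c = (t c)^2 * d c \<and> al c = 1 / t c) F"
    and t0: "(t \<longlongrightarrow> 0) F" and u: "(u \<longlongrightarrow> s) F" and d: "(d \<longlongrightarrow> s) F" and s: "s \<noteq> 0"
    and k: "((\<lambda>c. t c * u c * k c) \<longlongrightarrow> \<kappa>) F"
  shows "((\<lambda>c. B0 - hh c * (((n-p-1) * tv c + al c * (tv c)^2) / dd c - k c)) \<longlongrightarrow> B0 - p*(n-1) + \<kappa>) F"
proof -
  have dne: "eventually (\<lambda>c. d c \<noteq> 0) F" using tendsto_imp_eventually_ne[OF d s] .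
  have lim: "((\<lambda>c. B0 - u c * (p - t c * u c) * (n - 1 - t c * u c) / d c + t c * u c * k c)
      \<longlongrightarrow> B0 - s * (p - 0 * s) * (n - 1 - 0 * s) / s + \<kappa>) F"
    by (intro tendsto_intros t0 u d s k)
  have eq: "B0 - s * (p - 0 * s) * (n - 1 - 0 * s) / s + \<kappa> = B0 - p*(n-1) + \<kappa>" using s by simp
  show ?thesis
    unfolding eq[symmetric]
  proof (rule Lim_transform_eventually[OF lim])
    show "eventually (\<lambda>c. B0 - u c * (p - t c * u c) * (n - 1 - t c * u c) / d c + t c * u c * k c =
        B0 - hh c * (((n-p-1) * tv c + al c * (tv c)^2) / dd c - k c)) F"
      using ev dne
    proof eventually_elim
      case (elim c)
      then have e: "tv c = t c * (p - t c * u c)" "hh c = t c * u c" "dd c = (t c)^2 * d c" "al c = 1 / t c"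
        "t c \<noteq> 0" "d c \<noteq> 0" by auto
      show ?case unfolding e(1-4) using e(5,6) by (simp add: field_simps power2_eq_square)
    qed
  qed
qed

lemma lim0_gen:
  fixes al tv hh dd psi k :: "'a \<Rightarrow> real" and n p m r \<psi>0 B0 :: real
  assumes ev: "eventually (\<lambda>c. al c \<noteq> 0 \<and> tv c = m / al c + psi c \<and> hh c = r - al c * psi c) F"
    and a0: "(al \<longlongrightarrow> 0) F" and psi: "(psi \<longlongrightarrow> \<psi>0) F" and d: "(dd \<longlongrightarrow> \<psi>0) F" and s: "\<psi>0 \<noteq> 0"
    and k: "(k \<longlongrightarrow> 1) F" and m: "(n - p - 1) * m + m^2 = 0"
  shows "((\<lambda>c. B0 - hh c * (((n-p-1) * tv c + al c * (tv c)^2) / dd c - k c))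
     \<longlongrightarrow> B0 - r * ((n - p - 1 + 2*m) - 1)) F"
proof -
  have lim: "((\<lambda>c. B0 - (r - al c * psi c) * (((n - p - 1 + 2*m) * psi c + al c * (psi c)^2) / dd c - k c))
      \<longlongrightarrow> B0 - (r - 0 * \<psi>0) * (((n - p - 1 + 2*m) * \<psi>0 + 0 * \<psi>0^2) / \<psi>0 - 1)) F"
    by (intro tendsto_intros a0 psi d s k)
  have eq: "B0 - (r - 0 * \<psi>0) * (((n - p - 1 + 2*m) * \<psi>0 + 0 * \<psi>0^2) / \<psi>0 - 1) = B0 - r * ((n - p - 1 + 2*m) - 1)"
    using s by simp
  show ?thesis
    unfolding eq[symmetric]
  proof (rule Lim_transform_eventually[OF lim])
    show "eventually (\<lambda>c. B0 - (r - al c * psi c) * (((n - p - 1 + 2*m) * psi c + al c * (psi c)^2) / dd c - k c) =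
        B0 - hh c * (((n-p-1) * tv c + al c * (tv c)^2) / dd c - k c)) F"
      using ev
    proof eventually_elim
      case (elim c)
      have "(n-p-1) * tv c + al c * (tv c)^2 = ((n-p-1) * m + m^2) / al c + (n - p - 1 + 2*m) * psi c + al c * (psi c)^2"
        using elim by (simp add: field_simps power2_eq_square)
      with m elim show ?case by simp
    qed
  qed
qed

lemma case2_alg:
  fixes Y :: "real^'n^'p" and Q :: "real^'p^'p" and \<alpha> :: real
  assumes YJ: "Y ** Jm = 0" and a: "\<alpha> > 0"
    and inv: "invertible (\<alpha> *\<^sub>R mat 1 + (transpose Y ** Q ** Y + Jm))"
  shows "trace (matrix_inv (Y ** transpose Y ** Q + \<alpha> *\<^sub>R mat 1)) =
           (real CARD('p) - (real CARD('n) - 1)) / \<alpha> +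
           (trace (matrix_inv (\<alpha> *\<^sub>R mat 1 + (transpose Y ** Q ** Y + Jm))) - 1 / (1 + \<alpha>))"
    "trace (matrix_inv (Y ** transpose Y ** Q + \<alpha> *\<^sub>R mat 1) ** (Y ** transpose Y ** Q)) =
           (real CARD('n) - 1) - \<alpha> * (trace (matrix_inv (\<alpha> *\<^sub>R mat 1 + (transpose Y ** Q ** Y + Jm))) - 1 / (1 + \<alpha>))"
    "trace (matrix_inv (Y ** transpose Y ** Q + \<alpha> *\<^sub>R mat 1) ** matrix_inv (Y ** transpose Y ** Q + \<alpha> *\<^sub>R mat 1)
              ** (Y ** transpose Y ** Q)) =
       trace (matrix_inv (\<alpha> *\<^sub>R mat 1 + (transpose Y ** Q ** Y + Jm)))
       - \<alpha> * trace (matrix_inv (\<alpha> *\<^sub>R mat 1 + (transpose Y ** Q ** Y + Jm)) ** matrix_inv (\<alpha> *\<^sub>R mat 1 + (transpose Y ** Q ** Y + Jm)))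
       - (1 / (1 + \<alpha>))^2"
proof -
  define G where "G = transpose Y ** Q ** Y"
  define A where "A = \<alpha> *\<^sub>R mat 1 + (G + Jm)"
  define N where "N = matrix_inv A"
  define W where "W = Y ** transpose Y ** Q"
  define c where "c = 1 / (1 + \<alpha>)"
  define P where "P = Y ** N ** transpose Y ** Q"
  have invA: "invertible A" using inv by (simp add: A_def G_def)
  have NA: "N ** A = mat 1" unfolding N_def by (rule minv_prop(2)[OF invA])
  have GJ: "G ** Jm = 0" unfolding G_def by (simp add: matrix_mul_assoc[symmetric] YJ)
  have AJ: "A ** Jm = (1 + \<alpha>) *\<^sub>R Jm"
    by (simp add: A_def mat_rdistrib mat1_scaleR_mul GJ Jm_Jm algebra_simps)
  have NJ: "N ** Jm = c *\<^sub>R Jm"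
  proof -
    have "Jm = N ** (A ** Jm)" by (simp add: matrix_mul_assoc NA)
    also have "\<dots> = (1 + \<alpha>) *\<^sub>R (N ** Jm)" by (simp add: AJ mat_scaleR_right)
    finally have "Jm = (1 + \<alpha>) *\<^sub>R (N ** Jm)" .
    then have "c *\<^sub>R Jm = (c * (1 + \<alpha>)) *\<^sub>R (N ** Jm)" by (metis scaleR_scaleR)
    also have "c * (1 + \<alpha>) = 1" using a by (simp add: c_def)
    finally show ?thesis by simp
  qed
  have NG: "N ** G = mat 1 - \<alpha> *\<^sub>R N - c *\<^sub>R Jm"
  proof -
    have "mat 1 = N ** A" using NA by simp
    also have "\<dots> = \<alpha> *\<^sub>R N + N ** G + c *\<^sub>R Jm"
      by (simp add: A_def matrix_add_ldistrib mat_scaleR_mat1 NJ add.assoc)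
    finally show ?thesis by (simp add: algebra_simps)
  qed
  have YJM: "Y ** Jm ** M = 0" for M :: "real^'k^'n" by (simp add: YJ)
  have PW: "P ** W = W - \<alpha> *\<^sub>R P"
  proof -
    have "P ** W = Y ** (N ** G) ** (transpose Y ** Q)"
      by (simp add: P_def W_def G_def matrix_mul_assoc)
    also have "\<dots> = W - \<alpha> *\<^sub>R P"
      by (simp add: NG mat_diff_ldistrib mat_diff_rdistrib mat_scaleR_right mat_scaleR_left matrix_mul_assoc
          YJ W_def P_def)
    finally show ?thesis .
  qed
  define V0 where "V0 = (1/\<alpha>) *\<^sub>R (mat 1 - P)"
  have "V0 ** (W + \<alpha> *\<^sub>R mat 1) = (1/\<alpha>) *\<^sub>R (W + \<alpha> *\<^sub>R mat 1 - P ** W - \<alpha> *\<^sub>R P)"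
    by (simp add: V0_def mat_scaleR_left mat_diff_rdistrib matrix_add_ldistrib mat_scaleR_mat1 algebra_simps)
  also have "\<dots> = mat 1" using a by (simp add: PW)
  finally have V: "matrix_inv (W + \<alpha> *\<^sub>R mat 1) = V0" by (rule minv_unique_left(2))
  have PP: "P ** P = P - \<alpha> *\<^sub>R (Y ** N ** N ** transpose Y ** Q)"
  proof -
    have "P ** P = Y ** (N ** G) ** N ** (transpose Y ** Q)"
      by (simp add: P_def G_def matrix_mul_assoc)
    also have "\<dots> = P - \<alpha> *\<^sub>R (Y ** N ** N ** transpose Y ** Q)"
      by (simp add: NG mat_diff_ldistrib mat_diff_rdistrib mat_scaleR_right mat_scaleR_left matrix_mul_assoc
          YJ P_def)
    finally show ?thesis .
  qed
  have V0W: "V0 ** W = P"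
    using a by (simp add: V0_def mat_scaleR_left mat_diff_rdistrib PW)
  have V0V0W: "V0 ** V0 ** W = Y ** N ** N ** transpose Y ** Q"
  proof -
    have "V0 ** V0 ** W = V0 ** P" by (simp add: matrix_mul_assoc[symmetric] V0W)
    also have "\<dots> = Y ** N ** N ** transpose Y ** Q"
      using a by (simp add: V0_def mat_scaleR_left mat_diff_rdistrib PP)
    finally show ?thesis .
  qed
  have trP: "trace P = real CARD('n) - \<alpha> * trace N - c"
  proof -
    have "trace P = trace (Y ** (N ** transpose Y ** Q))" by (simp add: P_def matrix_mul_assoc)
    also have "\<dots> = trace (N ** transpose Y ** Q ** Y)" by (rule trace_mul_sym)
    also have "\<dots> = trace (N ** G)" by (simp add: G_def matrix_mul_assoc)
    also have "\<dots> = real CARD('n) - \<alpha> * trace N - c"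
      by (simp add: NG trace_sub trace_I trace_scaleR trace_Jm)
    finally show ?thesis .
  qed
  have trNNG: "trace (Y ** N ** N ** transpose Y ** Q) = trace N - \<alpha> * trace (N ** N) - c^2"
  proof -
    have "trace (Y ** N ** N ** transpose Y ** Q) = trace (Y ** (N ** N ** transpose Y ** Q))"
      by (simp add: matrix_mul_assoc)
    also have "\<dots> = trace (N ** N ** transpose Y ** Q ** Y)" by (rule trace_mul_sym)
    also have "\<dots> = trace (N ** (N ** G))" by (simp add: G_def matrix_mul_assoc)
    also have "\<dots> = trace N - \<alpha> * trace (N ** N) - c^2"
      by (simp add: NG mat_diff_ldistrib mat_scaleR_right trace_sub trace_scaleR NJ trace_Jm power2_eq_square)
    finally show ?thesis .
  qed
  have c1: "c * (1 + \<alpha>) = 1" using a by (simp add: c_def)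
  show "trace (matrix_inv (Y ** transpose Y ** Q + \<alpha> *\<^sub>R mat 1)) =
           (real CARD('p) - (real CARD('n) - 1)) / \<alpha> +
           (trace (matrix_inv (\<alpha> *\<^sub>R mat 1 + (transpose Y ** Q ** Y + Jm))) - 1 / (1 + \<alpha>))"
  proof -
    have "trace (matrix_inv (Y ** transpose Y ** Q + \<alpha> *\<^sub>R mat 1)) = (1/\<alpha>) * (real CARD('p) - trace P)"
      using V by (simp add: W_def V0_def trace_scaleR trace_sub trace_I)
    also have "\<dots> = (real CARD('p) - (real CARD('n) - 1)) / \<alpha> + (trace N - c)"
      using a c1 by (simp add: trP field_simps)
    finally show ?thesis by (simp add: N_def A_def G_def c_def)
  qed
  show "trace (matrix_inv (Y ** transpose Y ** Q + \<alpha> *\<^sub>R mat 1) ** (Y ** transpose Y ** Q)) =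
           (real CARD('n) - 1) - \<alpha> * (trace (matrix_inv (\<alpha> *\<^sub>R mat 1 + (transpose Y ** Q ** Y + Jm))) - 1 / (1 + \<alpha>))"
  proof -
    have "trace (matrix_inv (Y ** transpose Y ** Q + \<alpha> *\<^sub>R mat 1) ** (Y ** transpose Y ** Q)) = trace P"
      using V V0W by (simp add: W_def)
    also have "\<dots> = (real CARD('n) - 1) - \<alpha> * (trace N - c)"
      using c1 by (simp add: trP algebra_simps)
    finally show ?thesis by (simp add: N_def A_def G_def c_def)
  qed
  show "trace (matrix_inv (Y ** transpose Y ** Q + \<alpha> *\<^sub>R mat 1) ** matrix_inv (Y ** transpose Y ** Q + \<alpha> *\<^sub>R mat 1)
              ** (Y ** transpose Y ** Q)) =
       trace (matrix_inv (\<alpha> *\<^sub>R mat 1 + (transpose Y ** Q ** Y + Jm)))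
       - \<alpha> * trace (matrix_inv (\<alpha> *\<^sub>R mat 1 + (transpose Y ** Q ** Y + Jm)) ** matrix_inv (\<alpha> *\<^sub>R mat 1 + (transpose Y ** Q ** Y + Jm)))
       - (1 / (1 + \<alpha>))^2"
    using V V0V0W trNNG by (simp add: W_def N_def A_def G_def c_def)
qed

lemma Wmat_eq: "Wmat S X = Yc X ** transpose (Yc X) ** matrix_inv S"
  by (simp add: Wmat_def Yc_def)

lemma transpose_add: "transpose ((A::real^'n^'m) + B) = transpose A + transpose B"
  by (simp add: transpose_def vec_eq_iff)

lemma det_zero_mat: "det (0::real^'n^'n) = 0"
  using det_0[where 'a=real and 'n='n] by simp

lemma tendsto_at_right_scaleR:
  fixes W :: "real^'n^'n"
  shows "((\<lambda>a. W + a *\<^sub>R M) \<longlongrightarrow> W) (at_right 0)"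
proof -
  have "((\<lambda>a. W + a *\<^sub>R M) \<longlongrightarrow> W + 0 *\<^sub>R M) (at_right 0)"
    by (intro tendsto_intros)
  then show ?thesis by simp
qed

lemma small_case1:
  fixes S :: "real^'p^'p" and X :: "real^'n^'p"
  assumes S: "pos_def_mat S" and d: "det (Yc X ** transpose (Yc X)) \<noteq> 0"
  shows "\<exists>\<psi>0. \<psi>0 \<noteq> 0 \<and> ((\<lambda>a. trace (Vmat S X a)) \<longlongrightarrow> \<psi>0) (at_right 0)
     \<and> ((\<lambda>a. trace (Vmat S X a ** Vmat S X a ** Wmat S X)) \<longlongrightarrow> \<psi>0) (at_right 0)
     \<and> eventually (\<lambda>a. trace (Vmat S X a ** Wmat S X) = real CARD('p) - a * trace (Vmat S X a)) (at_right 0)"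
proof -
  define Y where "Y = Yc X"
  define Q where "Q = matrix_inv S"
  define Sm where "Sm = Y ** transpose Y"
  define W where "W = Wmat S X"
  have W: "W = Sm ** Q" by (simp add: W_def Wmat_eq Sm_def Y_def Q_def)
  have invS: "invertible S" by (rule posdef_invertible[OF S])
  have QS: "Q ** S = mat 1" unfolding Q_def by (rule minv_prop(2)[OF invS])
  have invQ: "invertible Q" by (rule minv_unique(1)[OF QS])
  have invSm: "invertible Sm" using d by (simp add: invertible_det_nz Sm_def Y_def)
  have invW: "invertible W" unfolding W by (rule invertible_mult[OF invSm invQ])
  have lim: "((\<lambda>a. W + a *\<^sub>R mat 1) \<longlongrightarrow> W) (at_right 0)" by (rule tendsto_at_right_scaleR)
  have Vlim: "((\<lambda>a. Vmat S X a) \<longlongrightarrow> matrix_inv W) (at_right 0)"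
    unfolding Vmat_def W_def[symmetric] by (rule tendsto_minv[OF lim invW])
  have "((\<lambda>a. det (W + a *\<^sub>R mat 1)) \<longlongrightarrow> det W) (at_right 0)" by (rule tendsto_det[OF lim])
  then have evd: "eventually (\<lambda>a. det (W + a *\<^sub>R mat 1) \<noteq> 0) (at_right 0)"
    by (rule tendsto_imp_eventually_ne) (use invW in \<open>simp add: invertible_det_nz\<close>)
  have WiW: "matrix_inv W ** W = mat 1" by (rule minv_prop(2)[OF invW])
  have WWW: "matrix_inv W ** matrix_inv W ** W = matrix_inv W"
    by (simp add: matrix_mul_assoc[symmetric] WiW)
  have DDlim: "((\<lambda>a. trace (Vmat S X a ** Vmat S X a ** Wmat S X)) \<longlongrightarrow> trace (matrix_inv W)) (at_right 0)"
  proof -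
    have "((\<lambda>a. trace (Vmat S X a ** Vmat S X a ** W)) \<longlongrightarrow> trace (matrix_inv W ** matrix_inv W ** W)) (at_right 0)"
      by (intro tendsto_trace tendsto_matmul Vlim tendsto_const)
    from this[unfolded WWW] show ?thesis by (simp add: W_def)
  qed
  have HH: "eventually (\<lambda>a. trace (Vmat S X a ** Wmat S X) = real CARD('p) - a * trace (Vmat S X a)) (at_right 0)"
    using evd
  proof eventually_elim
    case (elim a)
    then have inv: "invertible (W + a *\<^sub>R mat 1)" by (simp add: invertible_det_nz)
    have "Vmat S X a ** (W + a *\<^sub>R mat 1) = mat 1"
      unfolding Vmat_def W_def[symmetric] by (rule minv_prop(2)[OF inv])
    then have "Vmat S X a ** W = mat 1 - a *\<^sub>R Vmat S X a"
      by (simp add: matrix_add_ldistrib mat_scaleR_mat1 algebra_simps)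
    then show ?case by (simp add: W_def trace_sub trace_I trace_scaleR)
  qed
  (* positivity *)
  define Z where "Z = matrix_inv Sm ** Y"
  have SmS: "Sm ** matrix_inv Sm = mat 1" by (rule minv_prop(1)[OF invSm])
  have SmT: "transpose Sm = Sm" by (simp add: Sm_def matrix_transpose_mul)
  have SiT: "transpose (matrix_inv Sm) = matrix_inv Sm" by (simp add: minv_transpose[OF invSm] SmT)
  have ZZ: "Z ** transpose Z = matrix_inv Sm"
  proof -
    have "Z ** transpose Z = matrix_inv Sm ** Sm ** transpose (matrix_inv Sm)"
      by (simp add: Z_def Sm_def matrix_transpose_mul matrix_mul_assoc)
    also have "\<dots> = matrix_inv Sm" by (simp add: minv_prop(2)[OF invSm] SiT)
    finally show ?thesis .
  qed
  have Wi: "matrix_inv W = S ** matrix_inv Sm"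
  proof (rule minv_unique(2))
    have "W ** (S ** matrix_inv Sm) = Sm ** (Q ** S) ** matrix_inv Sm"
      by (simp add: W matrix_mul_assoc)
    also have "\<dots> = mat 1" by (simp add: QS SmS)
    finally show "W ** (S ** matrix_inv Sm) = mat 1" .
  qed
  have Z0: "Z \<noteq> 0"
  proof
    assume "Z = 0"
    then have "Sm ** Z = 0" by simp
    then have "Y = 0" by (simp add: Z_def matrix_mul_assoc SmS)
    then have "Sm = 0" by (simp add: Sm_def)
    with d show False by (simp add: Sm_def Y_def det_zero_mat)
  qed
  have "trace (matrix_inv W) = trace ((S ** Z) ** transpose Z)"
    by (simp add: Wi ZZ[symmetric] matrix_mul_assoc)
  also have "\<dots> = trace (transpose Z ** (S ** Z))" by (rule trace_mul_sym)
  also have "\<dots> = trace (transpose Z ** S ** Z)" by (simp add: matrix_mul_assoc)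
  finally have pos: "trace (matrix_inv W) > 0" using trace_quad_pos[OF S Z0] by simp
  have TVlim: "((\<lambda>a. trace (Vmat S X a)) \<longlongrightarrow> trace (matrix_inv W)) (at_right 0)"
    by (intro tendsto_trace Vlim)
  show ?thesis
    using pos TVlim DDlim HH by (intro exI[of _ "trace (matrix_inv W)"]) auto
qed

lemma small_case2:
  fixes S :: "real^'p^'p" and X :: "real^'n^'p"
  assumes S: "pos_def_mat S" and d: "det (transpose (Yc X) ** Yc X + Jm) \<noteq> 0" and n2: "CARD('n) \<ge> 2"
  shows "\<exists>\<psi>0 psi. \<psi>0 \<noteq> 0 \<and> (psi \<longlongrightarrow> \<psi>0) (at_right 0)
     \<and> ((\<lambda>a. trace (Vmat S X a ** Vmat S X a ** Wmat S X)) \<longlongrightarrow> \<psi>0) (at_right 0)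
     \<and> eventually (\<lambda>a. trace (Vmat S X a) = (real CARD('p) - (real CARD('n) - 1)) / a + psi a
           \<and> trace (Vmat S X a ** Wmat S X) = (real CARD('n) - 1) - a * psi a) (at_right 0)"
proof -
  define Y where "Y = Yc X"
  define Q where "Q = matrix_inv S"
  define G where "G = transpose Y ** Q ** Y"
  define K where "K = G + Jm"
  have Qpd: "pos_def_mat Q" and QT: "transpose Q = Q" using posdef_inv[OF S] by (auto simp: Q_def)
  have ker: "\<exists>s. v = s *\<^sub>R ones" if "Y *v v = 0" for v
    using ker_from_det[OF Yc_ones d] that by (simp add: Y_def)
  have dK: "det K \<noteq> 0"
    by (rule det_ne0_from_ker) (use K_inj[OF Yc_ones[of X] Qpd] ker in \<open>auto simp: K_def G_def Y_def\<close>)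
  have invK: "invertible K" using dK by (simp add: invertible_det_nz)
  define Ki where "Ki = matrix_inv K"
  have lim: "((\<lambda>a. K + a *\<^sub>R mat 1) \<longlongrightarrow> K) (at_right 0)" by (rule tendsto_at_right_scaleR)
  have lim': "((\<lambda>a. a *\<^sub>R mat 1 + K) \<longlongrightarrow> K) (at_right 0)" using lim by (simp add: add.commute)
  have Nlim: "((\<lambda>a. matrix_inv (a *\<^sub>R mat 1 + K)) \<longlongrightarrow> Ki) (at_right 0)"
    unfolding Ki_def by (rule tendsto_minv[OF lim' invK])
  have "((\<lambda>a. det (a *\<^sub>R mat 1 + K)) \<longlongrightarrow> det K) (at_right 0)" by (rule tendsto_det[OF lim'])
  then have evd: "eventually (\<lambda>a. det (a *\<^sub>R mat 1 + K) \<noteq> 0) (at_right 0)"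
    by (rule tendsto_imp_eventually_ne) (rule dK)
  have evp: "eventually (\<lambda>a. a > 0) (at_right (0::real))" by (simp add: eventually_at_right_less)
  define psi where "psi = (\<lambda>a. trace (matrix_inv (a *\<^sub>R mat 1 + K)) - 1 / (1 + a))"
  have psilim: "(psi \<longlongrightarrow> trace Ki - 1 / (1 + 0)) (at_right 0)"
    unfolding psi_def by (intro tendsto_intros tendsto_trace Nlim) simp
  have W: "Wmat S X = Y ** transpose Y ** Q" by (simp add: Wmat_eq Y_def Q_def)
  have YJ': "Y ** Jm = 0" by (simp add: Y_def YJ)
  have ev: "eventually (\<lambda>a. trace (Vmat S X a) = (real CARD('p) - (real CARD('n) - 1)) / a + psi a
           \<and> trace (Vmat S X a ** Wmat S X) = (real CARD('n) - 1) - a * psi a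
           \<and> trace (Vmat S X a ** Vmat S X a ** Wmat S X) =
             trace (matrix_inv (a *\<^sub>R mat 1 + K)) - a * trace (matrix_inv (a *\<^sub>R mat 1 + K) ** matrix_inv (a *\<^sub>R mat 1 + K))
              - (1 / (1 + a))^2) (at_right 0)"
    using evd evp
  proof eventually_elim
    case (elim a)
    then have inv: "invertible (a *\<^sub>R mat 1 + (transpose Y ** Q ** Y + Jm))"
      by (simp add: invertible_det_nz K_def G_def)
    show ?case
      using case2_alg[OF YJ' elim(2) inv]
      by (simp add: Vmat_def W psi_def K_def G_def)
  qed
  have DDlim: "((\<lambda>a. trace (Vmat S X a ** Vmat S X a ** Wmat S X)) \<longlongrightarrow> trace Ki - 0 * trace (Ki ** Ki) - (1 / (1 + 0))^2) (at_right 0)"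
  proof (rule Lim_transform_eventually)
    show "((\<lambda>a. trace (matrix_inv (a *\<^sub>R mat 1 + K)) - a * trace (matrix_inv (a *\<^sub>R mat 1 + K) ** matrix_inv (a *\<^sub>R mat 1 + K))
              - (1 / (1 + a))^2) \<longlongrightarrow> trace Ki - 0 * trace (Ki ** Ki) - (1 / (1 + 0))^2) (at_right 0)"
      by (intro tendsto_intros tendsto_trace tendsto_matmul Nlim) simp
    show "eventually (\<lambda>a. trace (matrix_inv (a *\<^sub>R mat 1 + K)) - a * trace (matrix_inv (a *\<^sub>R mat 1 + K) ** matrix_inv (a *\<^sub>R mat 1 + K))
              - (1 / (1 + a))^2 = trace (Vmat S X a ** Vmat S X a ** Wmat S X)) (at_right 0)"
      using ev by eventually_elim simp
  qed
  (* positivity *)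
  have KiK: "Ki ** K = mat 1" unfolding Ki_def by (rule minv_prop(2)[OF invK])
  have GJ: "G ** Jm = 0" by (simp add: G_def matrix_mul_assoc[symmetric] YJ')
  have KJ: "K ** Jm = Jm" by (simp add: K_def mat_rdistrib GJ Jm_Jm)
  have KiJ: "Ki ** Jm = Jm"
  proof -
    have "Ki ** (K ** Jm) = Jm" by (simp add: matrix_mul_assoc KiK)
    then show ?thesis by (simp add: KJ)
  qed
  have KT: "transpose K = K"
    by (simp add: K_def G_def transpose_add matrix_transpose_mul QT transpose_Jm matrix_mul_assoc)
  have KiT: "transpose Ki = Ki" unfolding Ki_def by (simp add: minv_transpose[OF invK] KT)
  have tr1: "trace (Ki ** Ki ** G) = trace Ki - 1"
  proof -
    have "Ki ** Ki ** G = Ki ** (Ki ** K) - Ki ** (Ki ** Jm)"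
      by (simp add: K_def matrix_add_ldistrib matrix_mul_assoc)
    also have "\<dots> = Ki - Jm" by (simp add: KiK KiJ)
    finally show ?thesis by (simp add: trace_sub trace_Jm)
  qed
  define Z where "Z = Y ** Ki"
  have Z0: "Z \<noteq> 0"
  proof
    assume "Z = 0"
    then have "Z ** K = 0" by simp
    then have "Y = 0" by (simp add: Z_def matrix_mul_assoc[symmetric] KiK)
    then have "K = Jm" by (simp add: K_def G_def)
    with dK Jm_singular[OF n2] show False by simp
  qed
  have "trace (transpose Z ** Q ** Z) = trace (Ki ** (G ** Ki))"
    by (simp add: Z_def matrix_transpose_mul KiT G_def matrix_mul_assoc)
  also have "\<dots> = trace ((G ** Ki) ** Ki)" by (rule trace_mul_sym)
  also have "\<dots> = trace (G ** (Ki ** Ki))" by (simp add: matrix_mul_assoc)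
  also have "\<dots> = trace ((Ki ** Ki) ** G)" by (rule trace_mul_sym)
  finally have "trace Ki - 1 > 0" using trace_quad_pos[OF Qpd Z0] tr1 by simp
  then show ?thesis
    using psilim DDlim ev
    by (intro exI[of _ "trace Ki - 1"] exI[of _ psi]) (auto elim: eventually_mono)
qed

lemma bS_eq: "bS S X a c0 = ((real CARD('n) - 1) * real CARD('p) - 2) -
   trace (Vmat S (X::real^'n^'p) a ** Wmat S X) *
   (((real CARD('n) - real CARD('p) - 1) * trace (Vmat S X a) + a * (trace (Vmat S X a))^2)
      / trace (Vmat S X a ** Vmat S X a ** Wmat S X) - (2 * c0 + 1))"
  by (simp add: bS_def aS_def Let_def)

lemma small_gen:
  fixes S :: "real^'p^'p" and X :: "real^'n^'p" and m r \<psi>0 :: real and psi :: "real \<Rightarrow> real"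
    and al k0 :: "'a \<Rightarrow> real"
  assumes ev: "eventually (\<lambda>a. trace (Vmat S X a) = m / a + psi a \<and> trace (Vmat S X a ** Wmat S X) = r - a * psi a) (at_right 0)"
    and psi: "(psi \<longlongrightarrow> \<psi>0) (at_right 0)"
    and dd: "((\<lambda>a. trace (Vmat S X a ** Vmat S X a ** Wmat S X)) \<longlongrightarrow> \<psi>0) (at_right 0)"
    and s: "\<psi>0 \<noteq> 0"
    and m: "(real CARD('n) - real CARD('p) - 1) * m + m^2 = 0"
    and al: "filterlim al (at_right 0) F" and k: "((\<lambda>c. 2 * k0 c + 1) \<longlongrightarrow> 1) F"
  shows "((\<lambda>c. bS S X (al c) (k0 c)) \<longlongrightarrow> ((real CARD('n) - 1) * real CARD('p) - 2)
           - r * ((real CARD('n) - real CARD('p) - 1 + 2*m) - 1)) F"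
proof -
  have ev2: "eventually (\<lambda>a. a \<noteq> 0 \<and> trace (Vmat S X a) = m / a + psi a \<and> trace (Vmat S X a ** Wmat S X) = r - a * psi a) (at_right 0)"
    using ev eventually_at_right_less[of "0::real"] by eventually_elim auto
  have ev3: "eventually (\<lambda>c. al c \<noteq> 0 \<and> trace (Vmat S X (al c)) = m / al c + psi (al c) \<and>
       trace (Vmat S X (al c) ** Wmat S X) = r - al c * psi (al c)) F"
    using eventually_compose_filterlim[OF ev2 al] by simp
  have a0: "(al \<longlongrightarrow> 0) F" using al by (simp add: filterlim_at)
  have psi': "((\<lambda>c. psi (al c)) \<longlongrightarrow> \<psi>0) F" by (rule filterlim_compose[OF psi al])
  have dd': "((\<lambda>c. trace (Vmat S X (al c) ** Vmat S X (al c) ** Wmat S X)) \<longlongrightarrow> \<psi>0) F"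
    by (rule filterlim_compose[OF dd al])
  show ?thesis
    unfolding bS_eq
    by (rule lim0_gen[OF ev3 a0 psi' dd' s k m])
qed

lemma large_gen:
  fixes S :: "real^'p^'p" and X :: "real^'n^'p" and al k0 :: "'a \<Rightarrow> real"
  assumes al: "filterlim al at_top F" and s: "trace (Wmat S X) \<noteq> 0"
    and k: "((\<lambda>c. (1 / al c) * trace (Wmat S X) * (2 * k0 c + 1)) \<longlongrightarrow> \<kappa>) F"
  shows "((\<lambda>c. bS S X (al c) (k0 c)) \<longlongrightarrow> ((real CARD('n) - 1) * real CARD('p) - 2)
           - real CARD('p) * (real CARD('n) - 1) + \<kappa>) F"
proof -
  define W where "W = Wmat S X"
  define t where "t = (\<lambda>c. 1 / al c)"
  define u where "u = (\<lambda>c. trace (W ** matrix_inv (mat 1 + t c *\<^sub>R W)))"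
  define d where "d = (\<lambda>c. trace (matrix_inv (mat 1 + t c *\<^sub>R W) ** matrix_inv (mat 1 + t c *\<^sub>R W) ** W))"
  have t0: "(t \<longlongrightarrow> 0) F"
    unfolding t_def by (rule tendsto_divide_0[OF tendsto_const filterlim_at_top_imp_at_infinity[OF al]])
  have apos: "eventually (\<lambda>c. al c > 0) F"
    using eventually_compose_filterlim[OF eventually_gt_at_top[of 0] al] .
  have Blim: "((\<lambda>c. matrix_inv (mat 1 + t c *\<^sub>R W)) \<longlongrightarrow> mat 1) F" by (rule big_alpha_lim(1)[OF t0])
  have evi: "eventually (\<lambda>c. invertible (mat 1 + t c *\<^sub>R W)) F" by (rule big_alpha_lim(2)[OF t0])
  have ulim: "(u \<longlongrightarrow> trace W) F"
  proof -
    have "(u \<longlongrightarrow> trace (W ** mat 1)) F" unfolding u_def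
      by (intro tendsto_trace tendsto_matmul tendsto_const Blim)
    then show ?thesis by simp
  qed
  have dlim: "(d \<longlongrightarrow> trace W) F"
  proof -
    have "(d \<longlongrightarrow> trace (mat 1 ** mat 1 ** W)) F" unfolding d_def
      by (intro tendsto_trace tendsto_matmul tendsto_const Blim)
    then show ?thesis by simp
  qed
  have ev: "eventually (\<lambda>c. t c \<noteq> 0 \<and> trace (Vmat S X (al c)) = t c * (real CARD('p) - t c * u c)
      \<and> trace (Vmat S X (al c) ** Wmat S X) = t c * u c
      \<and> trace (Vmat S X (al c) ** Vmat S X (al c) ** Wmat S X) = (t c)^2 * d c \<and> al c = 1 / t c) F"
    using apos evi
  proof eventually_elim
    case (elim c)
    then have tp: "t c > 0" by (simp add: t_def)
    have a: "al c = 1 / t c" using elim by (simp add: t_def)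
    have V: "Vmat S X (al c) = matrix_inv (W + (1 / t c) *\<^sub>R mat 1)" by (simp add: Vmat_def W_def a)
    show ?case
      using big_alpha_alg[OF tp elim(2)] tp a
      unfolding V by (simp add: u_def d_def W_def)
  qed
  have k': "((\<lambda>c. t c * u c * (2 * k0 c + 1)) \<longlongrightarrow> \<kappa> * (trace W / trace W)) F"
  proof (rule Lim_transform_eventually)
    show "((\<lambda>c. ((1 / al c) * trace (Wmat S X) * (2 * k0 c + 1)) * (u c / trace W)) \<longlongrightarrow> \<kappa> * (trace W / trace W)) F"
      by (intro tendsto_intros k ulim) (use s in \<open>simp add: W_def\<close>)
    show "eventually (\<lambda>c. ((1 / al c) * trace (Wmat S X) * (2 * k0 c + 1)) * (u c / trace W) = t c * u c * (2 * k0 c + 1)) F"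
      using s by (intro always_eventually allI) (simp add: t_def W_def)
  qed
  have k'': "((\<lambda>c. t c * u c * (2 * k0 c + 1)) \<longlongrightarrow> \<kappa>) F" using k' s by (simp add: W_def)
  show ?thesis
    unfolding bS_eq
    by (rule lim_inf_gen[OF ev t0 ulim dlim _ k'']) (use s in \<open>simp add: W_def\<close>)
qed

lemma trW_pos:
  fixes S :: "real^'p^'p" and X :: "real^'n^'p"
  assumes S: "pos_def_mat S" and Y0: "Yc X \<noteq> 0"
  shows "trace (Wmat S X) > 0"
proof -
  have "trace (Wmat S X) = trace (Yc X ** (transpose (Yc X) ** matrix_inv S))"
    by (simp add: Wmat_eq matrix_mul_assoc)
  also have "\<dots> = trace ((transpose (Yc X) ** matrix_inv S) ** Yc X)" by (rule trace_mul_sym)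
  also have "\<dots> > 0" by (rule trace_quad_pos[OF posdef_inv(1)[OF S] Y0])
  finally show ?thesis .
qed

lemma final_from_small:
  fixes S :: "real^'p^'p" and X :: "real^'n^'p" and m r \<psi>0 Tg :: real and psi :: "real \<Rightarrow> real"
  assumes S: "pos_def_mat S" and Y0: "Yc X \<noteq> 0"
    and ev: "eventually (\<lambda>a. trace (Vmat S X a) = m / a + psi a \<and> trace (Vmat S X a ** Wmat S X) = r - a * psi a) (at_right 0)"
    and psi: "(psi \<longlongrightarrow> \<psi>0) (at_right 0)"
    and dd: "((\<lambda>a. trace (Vmat S X a ** Vmat S X a ** Wmat S X)) \<longlongrightarrow> \<psi>0) (at_right 0)"
    and s: "\<psi>0 \<noteq> 0"
    and m: "(real CARD('n) - real CARD('p) - 1) * m + m^2 = 0"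
    and val: "((real CARD('n) - 1) * real CARD('p) - 2) - r * ((real CARD('n) - real CARD('p) - 1 + 2*m) - 1) = Tg"
  shows "((\<lambda>c. bS S X c 0) \<longlongrightarrow> Tg) (at_right 0)
   \<and> ((\<lambda>c. bS S X (c * trace (Wmat S X)) c) \<longlongrightarrow> Tg) (at_right 0)
   \<and> ((\<lambda>c. bS S X c 0) \<longlongrightarrow> -2) at_top
   \<and> ((\<lambda>c. bS S X (c * trace (Wmat S X)) c) \<longlongrightarrow> 0) at_top"
proof (intro conjI)
  define s1 where "s1 = trace (Wmat S X)"
  have s1: "s1 > 0" unfolding s1_def by (rule trW_pos[OF S Y0])
  show "((\<lambda>c. bS S X c 0) \<longlongrightarrow> Tg) (at_right 0)"
    using small_gen[OF ev psi dd s m filterlim_ident, of "\<lambda>c. 0"] val by simp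
  have fl: "filterlim (\<lambda>c. c * s1) (at_right 0) (at_right 0)"
    unfolding filterlim_at
  proof
    show "eventually (\<lambda>c. c * s1 \<in> {0<..} \<and> c * s1 \<noteq> 0) (at_right (0::real))"
      using eventually_at_right_less[of "0::real"] by eventually_elim (use s1 in simp)
    have "((\<lambda>c. c * s1) \<longlongrightarrow> 0 * s1) (at_right (0::real))"
      by (intro tendsto_intros tendsto_mono[OF at_le tendsto_ident_at])
    then show "((\<lambda>c. c * s1) \<longlongrightarrow> 0) (at_right 0)" by simp
  qed
  have k2: "((\<lambda>c. 2 * c + 1) \<longlongrightarrow> (1::real)) (at_right 0)"
  proof -
    have "((\<lambda>c. 2 * c + 1) \<longlongrightarrow> 2 * 0 + (1::real)) (at_right 0)"
      by (intro tendsto_intros tendsto_mono[OF at_le tendsto_ident_at])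
    then show ?thesis by simp
  qed
  show "((\<lambda>c. bS S X (c * trace (Wmat S X)) c) \<longlongrightarrow> Tg) (at_right 0)"
    using small_gen[OF ev psi dd s m fl, of "\<lambda>c. c"] val k2 by (simp add: s1_def)
  have s0: "trace (Wmat S X) \<noteq> 0" using s1 by (simp add: s1_def)
  have v3: "((real CARD('n) - 1) * real CARD('p) - 2) - real CARD('p) * (real CARD('n) - 1) + 0 = -2"
    by (simp add: algebra_simps)
  have k3: "((\<lambda>c. (1 / c) * trace (Wmat S X) * (2 * 0 + 1)) \<longlongrightarrow> 0) at_top"
  proof -
    have "((\<lambda>c. trace (Wmat S X) / c) \<longlongrightarrow> 0) at_top"
      by (rule tendsto_divide_0[OF tendsto_const filterlim_at_top_imp_at_infinity[OF filterlim_ident]])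
    then show ?thesis by simp
  qed
  show "((\<lambda>c. bS S X c 0) \<longlongrightarrow> -2) at_top"
    using large_gen[OF filterlim_ident s0 k3] v3 by simp
  have fl4: "filterlim (\<lambda>c. c * s1) at_top at_top"
    using filterlim_tendsto_pos_mult_at_top[OF tendsto_const s1 filterlim_ident]
    by (simp add: mult.commute)
  have k4: "((\<lambda>c. (1 / (c * s1)) * trace (Wmat S X) * (2 * c + 1)) \<longlongrightarrow> 2) at_top"
  proof (rule Lim_transform_eventually)
    have "((\<lambda>c::real. 2 + 1 / c) \<longlongrightarrow> 2 + 0) at_top"
      by (intro tendsto_intros tendsto_divide_0[OF tendsto_const filterlim_at_top_imp_at_infinity[OF filterlim_ident]])
    then show "((\<lambda>c. 2 + 1 / c) \<longlongrightarrow> (2::real)) at_top" by simp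
    show "eventually (\<lambda>c. 2 + 1 / c = (1 / (c * s1)) * trace (Wmat S X) * (2 * c + 1)) at_top"
      using eventually_gt_at_top[of "0::real"] by eventually_elim (use s1 in \<open>simp add: s1_def field_simps\<close>)
  qed
  have v4: "((real CARD('n) - 1) * real CARD('p) - 2) - real CARD('p) * (real CARD('n) - 1) + 2 = 0"
    by (simp add: algebra_simps)
  show "((\<lambda>c. bS S X (c * trace (Wmat S X)) c) \<longlongrightarrow> 0) at_top"
    using large_gen[OF fl4 s0, of "\<lambda>c. c" 2] k4 v4 by (simp add: s1_def)
qed

lemma val1:
  fixes N P :: real assumes "0 \<le> P" "P \<le> N - 1"
  shows "((N-1)*P - 2) - P*((N-P-1+2*0) - 1) = min ((N-1)^2 + (N-1) - 2) (P^2 + P - 2)"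
proof -
  have "P^2 \<le> (N-1)^2" by (rule power_mono) (use assms in auto)
  then have "P^2 + P - 2 \<le> (N-1)^2 + (N-1) - 2" using assms by linarith
  then have "min ((N-1)^2 + (N-1) - 2) (P^2 + P - 2) = P^2 + P - 2" by simp
  then show ?thesis by (simp add: power2_eq_square algebra_simps)
qed

lemma val2:
  fixes N P :: real assumes "1 \<le> N" "N - 1 \<le> P"
  shows "((N-1)*P - 2) - (N-1)*((N-P-1+2*(P-(N-1))) - 1) = min ((N-1)^2 + (N-1) - 2) (P^2 + P - 2)"
proof -
  have "(N-1)^2 \<le> P^2" by (rule power_mono) (use assms in auto)
  then have "(N-1)^2 + (N-1) - 2 \<le> P^2 + P - 2" using assms by linarith
  then have "min ((N-1)^2 + (N-1) - 2) (P^2 + P - 2) = (N-1)^2 + (N-1) - 2" by simp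
  then show ?thesis by (simp add: power2_eq_square algebra_simps)
qed

theorem proposition4:
  fixes Sigma :: "real^'p^'p" and Theta :: "real^'n^'p"
  assumes "CARD('n) \<ge> 2"
    and "pos_def_mat Sigma"
    and "\<bar>real CARD('n) - real CARD('p) - 1\<bar> > 1"
  shows "AE X in data_law Sigma Theta.
     ((\<lambda>c. bS Sigma X c 0) \<longlongrightarrow>
         min ((real CARD('n) - 1)^2 + (real CARD('n) - 1) - 2)
             ((real CARD('p))^2 + real CARD('p) - 2)) (at_right 0)
   \<and> ((\<lambda>c. bS Sigma X (c * trace (Wmat Sigma X)) c) \<longlongrightarrow>
         min ((real CARD('n) - 1)^2 + (real CARD('n) - 1) - 2)
             ((real CARD('p))^2 + real CARD('p) - 2)) (at_right 0)
   \<and> ((\<lambda>c. bS Sigma X c 0) \<longlongrightarrow> -2) at_top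
   \<and> ((\<lambda>c. bS Sigma X (c * trace (Wmat Sigma X)) c) \<longlongrightarrow> 0) at_top"
proof (cases "CARD('p) < CARD('n)")
  case True
  show ?thesis
    using AE_good1[OF True, of Sigma Theta]
  proof eventually_elim
    case (elim X)
    obtain \<psi>0 where s: "\<psi>0 \<noteq> 0" and psi: "((\<lambda>a. trace (Vmat Sigma X a)) \<longlongrightarrow> \<psi>0) (at_right 0)"
      and dd: "((\<lambda>a. trace (Vmat Sigma X a ** Vmat Sigma X a ** Wmat Sigma X)) \<longlongrightarrow> \<psi>0) (at_right 0)"
      and hh: "eventually (\<lambda>a. trace (Vmat Sigma X a ** Wmat Sigma X) = real CARD('p) - a * trace (Vmat Sigma X a)) (at_right 0)"
      using small_case1[OF assms(2) elim] by blast
    have Y0: "Yc X \<noteq> 0"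
    proof
      assume "Yc X = 0"
      with elim show False by (simp add: det_zero_mat)
    qed
    have ev: "eventually (\<lambda>a. trace (Vmat Sigma X a) = 0 / a + trace (Vmat Sigma X a) \<and>
        trace (Vmat Sigma X a ** Wmat Sigma X) = real CARD('p) - a * trace (Vmat Sigma X a)) (at_right 0)"
      using hh by eventually_elim simp
    have val: "((real CARD('n) - 1) * real CARD('p) - 2) - real CARD('p) * ((real CARD('n) - real CARD('p) - 1 + 2*0) - 1)
       = min ((real CARD('n) - 1)^2 + (real CARD('n) - 1) - 2) ((real CARD('p))^2 + real CARD('p) - 2)"
      by (rule val1) (use True in auto)
    show ?case
      by (rule final_from_small[OF assms(2) Y0 ev psi dd s _ val]) simp
  qed
next
  case False
  then have np: "CARD('n) \<le> CARD('p)" by simp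
  show ?thesis
    using AE_good2[OF np, of Sigma Theta]
  proof eventually_elim
    case (elim X)
    obtain \<psi>0 psi where s: "\<psi>0 \<noteq> 0" and psi: "(psi \<longlongrightarrow> \<psi>0) (at_right 0)"
      and dd: "((\<lambda>a. trace (Vmat Sigma X a ** Vmat Sigma X a ** Wmat Sigma X)) \<longlongrightarrow> \<psi>0) (at_right 0)"
      and ev: "eventually (\<lambda>a. trace (Vmat Sigma X a) = (real CARD('p) - (real CARD('n) - 1)) / a + psi a
           \<and> trace (Vmat Sigma X a ** Wmat Sigma X) = (real CARD('n) - 1) - a * psi a) (at_right 0)"
      using small_case2[OF assms(2) elim assms(1)] by blast
    have Y0: "Yc X \<noteq> 0"
    proof
      assume "Yc X = 0"
      with elim Jm_singular[OF assms(1)] show False by simp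
    qed
    have val: "((real CARD('n) - 1) * real CARD('p) - 2) - (real CARD('n) - 1) * ((real CARD('n) - real CARD('p) - 1 + 2*(real CARD('p) - (real CARD('n) - 1))) - 1)
       = min ((real CARD('n) - 1)^2 + (real CARD('n) - 1) - 2) ((real CARD('p))^2 + real CARD('p) - 2)"
      by (rule val2) (use np assms(1) in auto)
    have m: "(real CARD('n) - real CARD('p) - 1) * (real CARD('p) - (real CARD('n) - 1)) + (real CARD('p) - (real CARD('n) - 1))^2 = 0"
      by (simp add: power2_eq_square algebra_simps)
    show ?case
      by (rule final_from_small[OF assms(2) Y0 ev psi dd s m val])
  qed
qed

end
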